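(* Let $G$ be an undirected graph on $n$ vertices that is $\epsilon$-close to being connected, let $K$ be a positive integer and $\delta\in(0,1)$. For each vertex $v$, let $C(v)$ be its connected component and fix (independently of any randomness) a set $U(v)\subseteq C(v)$ with $v\in U(v)$, such that $U(v)=C(v)$ if $|C(v)|<K$ and $|U(v)|=K$ otherwise (for example, the first $K$ vertices visited by a breadth-first search from $v$). Assign to each vertex $v$ an independent uniformly random rank $r(v)\in(0,1]$, and call $v$ special if $r(v)<r(u)$ for all $u\in U(v)\setminus\{v\}$. Then with probability at least $1-\delta$, the number of special vertices is at most $\frac{n}{\delta K}+\epsilon m+1$.
   Context: $m$ is a fixed upper bound on the number of edges. $\mathrm{dist}(G_1,G_2)$ is the number of unordered vertex pairs that are an edge in exactly one graph, divided by $m$; $G$ is $\epsilon$-close to being connected if some connected graph $G'$ on the same vertex set has $\mathrm{dist}(G,G')\le\epsilon$. *)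

theory Defs
  imports "HOL-Probability.Probability"
begin

definition graph_on :: "'a set \<Rightarrow> 'a set set \<Rightarrow> bool" where
  "graph_on V E \<longleftrightarrow> finite V \<and> (\<forall>e\<in>E. e \<subseteq> V \<and> card e = 2)"

definition adj :: "'a set set \<Rightarrow> ('a \<times> 'a) set" where
  "adj E = {(u, w). {u, w} \<in> E}"

definition comp :: "'a set \<Rightarrow> 'a set set \<Rightarrow> 'a \<Rightarrow> 'a set" where
  "comp V E v = {u \<in> V. (v, u) \<in> (adj E)\<^sup>*}"

definition connected_graph :: "'a set \<Rightarrow> 'a set set \<Rightarrow> bool" where
  "connected_graph V E \<longleftrightarrow> (\<forall>u\<in>V. \<forall>w\<in>V. (u, w) \<in> (adj E)\<^sup>*)"

definition graph_dist :: "nat \<Rightarrow> 'a set set \<Rightarrow> 'a set set \<Rightarrow> real" where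
  "graph_dist m E1 E2 = real (card ((E1 - E2) \<union> (E2 - E1))) / real m"

definition eps_close_connected :: "nat \<Rightarrow> real \<Rightarrow> 'a set \<Rightarrow> 'a set set \<Rightarrow> bool" where
  "eps_close_connected m \<epsilon> V E \<longleftrightarrow>
     (\<exists>E'. graph_on V E' \<and> connected_graph V E' \<and> graph_dist m E E' \<le> \<epsilon>)"

definition rank_space :: "'a set \<Rightarrow> ('a \<Rightarrow> real) measure" where
  "rank_space V = PiM V (\<lambda>_. uniform_measure lborel {0<..1})"

definition special :: "('a \<Rightarrow> 'a set) \<Rightarrow> ('a \<Rightarrow> real) \<Rightarrow> 'a \<Rightarrow> bool" where
  "special U r v \<longleftrightarrow> (\<forall>u\<in>U v - {v}. r v < r u)"

end

theory Submission
  imports Defs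
begin



lemma rt_step:
  assumes "(x,y) \<in> (R \<union> {(a,b),(b,a)})\<^sup>*"
  shows "(x,y) \<in> R\<^sup>* \<or> ((x,a) \<in> R\<^sup>* \<and> (b,y) \<in> R\<^sup>*) \<or> ((x,b) \<in> R\<^sup>* \<and> (a,y) \<in> R\<^sup>*)"
  using assms
proof (induction rule: rtrancl_induct)
  case base then show ?case by simp
next
  case (step y z)
  from step.hyps(2) consider "(y,z) \<in> R" | "y = a" "z = b" | "y = b" "z = a" by blast
  then show ?case
  proof cases
    case 1 then show ?thesis using step.IH by (blast intro: rtrancl_into_rtrancl)
  next
    case 2 then show ?thesis using step.IH by (metis rtrancl.rtrancl_refl)
  next
    case 3 then show ?thesis using step.IH by (metis rtrancl.rtrancl_refl)
  qed
qed

lemma adj_sym: "(u,w) \<in> (adj F)\<^sup>* \<Longrightarrow> (w,u) \<in> (adj F)\<^sup>*"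
proof -
  have "sym (adj F)" unfolding sym_def adj_def by (auto simp: insert_commute)
  then have "sym ((adj F)\<^sup>*)" by (rule sym_rtrancl)
  then show "(u,w) \<in> (adj F)\<^sup>* \<Longrightarrow> (w,u) \<in> (adj F)\<^sup>*" unfolding sym_def by blast
qed

lemma comp_eq:
  assumes "(v,w) \<in> (adj F)\<^sup>*" shows "comp V F v = comp V F w"
proof -
  have wv: "(w,v) \<in> (adj F)\<^sup>*" using assms by (rule adj_sym)
  have "\<And>u. (v,u) \<in> (adj F)\<^sup>* \<longleftrightarrow> (w,u) \<in> (adj F)\<^sup>*"
    using rtrancl_trans[OF assms] rtrancl_trans[OF wv] by blast
  then show ?thesis unfolding comp_def by simp
qed

lemma card_image_le_fun:
  assumes "finite W" "\<And>x y. x \<in> W \<Longrightarrow> y \<in> W \<Longrightarrow> g x = g y \<Longrightarrow> f x = f y"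
  shows "card (f ` W) \<le> card (g ` W)"
proof -
  define h where "h = (\<lambda>z. f (SOME x. x \<in> W \<and> g x = z))"
  have "f ` W = h ` (g ` W)"
  proof (intro equalityI subsetI)
    fix y assume "y \<in> f ` W"
    then obtain x where x: "x \<in> W" "y = f x" by blast
    have "\<exists>x'. x' \<in> W \<and> g x' = g x" using x by blast
    then have "(SOME x'. x' \<in> W \<and> g x' = g x) \<in> W \<and> g (SOME x'. x' \<in> W \<and> g x' = g x) = g x"
      by (rule someI_ex)
    then have "f (SOME x'. x' \<in> W \<and> g x' = g x) = f x" using assms(2)[OF _ x(1)] by blast
    then have "h (g x) = f x" unfolding h_def by simp
    then show "y \<in> h ` (g ` W)" using x by (metis imageI)
  next
    fix y assume "y \<in> h ` (g ` W)"
    then obtain x where x: "x \<in> W" "y = h (g x)" by blast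
    have "\<exists>x'. x' \<in> W \<and> g x' = g x" using x by blast
    then have "(SOME x'. x' \<in> W \<and> g x' = g x) \<in> W \<and> g (SOME x'. x' \<in> W \<and> g x' = g x) = g x"
      by (rule someI_ex)
    then have "f (SOME x'. x' \<in> W \<and> g x' = g x) = f x" using assms(2)[OF _ x(1)] by blast
    then have "h (g x) = f x" unfolding h_def by simp
    then show "y \<in> f ` W" using x by auto
  qed
  then show ?thesis using assms(1) by (simp add: card_image_le)
qed

lemma adj_insert: "adj (insert e F) = adj F \<union> {(u,w). {u,w} = e}"
  unfolding adj_def by auto

lemma count_step:
  assumes "finite V"
  shows "card (comp V F ` V) \<le> card (comp V (insert e F) ` V) + 1"
proof (cases "\<exists>a b. e = {a,b}")
  case False
  then have "adj (insert e F) = adj F" unfolding adj_insert by auto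
  then have "comp V (insert e F) = comp V F" unfolding comp_def by simp
  then show ?thesis by simp
next
  case True
  then obtain a b where e: "e = {a,b}" by blast
  have "{(u,w). {u,w} = e} = {(a,b),(b,a)}" unfolding e by (auto simp: doubleton_eq_iff)
  then have A: "adj (insert e F) = adj F \<union> {(a,b),(b,a)}" unfolding adj_insert by simp
  define W where "W = V - comp V F b"
  have fW: "finite W" using assms W_def by simp
  have "comp V F ` V \<subseteq> insert (comp V F b) (comp V F ` W)"
  proof
    fix C assume "C \<in> comp V F ` V"
    then obtain v where v: "v \<in> V" "C = comp V F v" by blast
    show "C \<in> insert (comp V F b) (comp V F ` W)"
    proof (cases "v \<in> comp V F b")
      case True
      then have "(b,v) \<in> (adj F)\<^sup>*" unfolding comp_def by simp
      then have "comp V F b = comp V F v" by (rule comp_eq)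
      then show ?thesis using v by simp
    next
      case False then show ?thesis using v W_def by auto
    qed
  qed
  then have "card (comp V F ` V) \<le> card (insert (comp V F b) (comp V F ` W))"
    using fW by (intro card_mono) auto
  also have "\<dots> \<le> card (comp V F ` W) + 1"
    using fW by (simp add: card_insert_if)
  finally have 1: "card (comp V F ` V) \<le> card (comp V F ` W) + 1" .
  have 2: "card (comp V F ` W) \<le> card (comp V (insert e F) ` W)"
  proof (rule card_image_le_fun[OF fW])
    fix v w assume vw: "v \<in> W" "w \<in> W" "comp V (insert e F) v = comp V (insert e F) w"
    have "w \<in> comp V (insert e F) w" using vw W_def unfolding comp_def by auto
    then have "(v,w) \<in> (adj F \<union> {(a,b),(b,a)})\<^sup>*" using vw(3) A unfolding comp_def by auto
    then have c: "(v,w) \<in> (adj F)\<^sup>* \<or> ((v,a) \<in> (adj F)\<^sup>* \<and> (b,w) \<in> (adj F)\<^sup>*) \<or> ((v,b) \<in> (adj F)\<^sup>* \<and> (a,w) \<in> (adj F)\<^sup>*)"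
      by (rule rt_step)
    have "(b,w) \<notin> (adj F)\<^sup>*" using vw W_def unfolding comp_def by auto
    moreover have "(v,b) \<notin> (adj F)\<^sup>*"
    proof
      assume "(v,b) \<in> (adj F)\<^sup>*"
      then have "(b,v) \<in> (adj F)\<^sup>*" by (rule adj_sym)
      then show False using vw(1) W_def unfolding comp_def by simp
    qed
    ultimately have "(v,w) \<in> (adj F)\<^sup>*" using c by blast
    then show "comp V F v = comp V F w" by (rule comp_eq)
  qed
  have 3: "card (comp V (insert e F) ` W) \<le> card (comp V (insert e F) ` V)"
    using assms W_def by (intro card_mono) auto
  show ?thesis using 1 2 3 by linarith
qed

lemma count_union:
  assumes "finite A" "finite V"
  shows "card (comp V F ` V) \<le> card (comp V (F \<union> A) ` V) + card A"
  using assms(1)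
proof (induction A rule: finite_induct)
  case empty then show ?case by simp
next
  case (insert x A)
  have "card (comp V (F \<union> A) ` V) \<le> card (comp V (insert x (F \<union> A)) ` V) + 1"
    by (rule count_step[OF assms(2)])
  then show ?case using insert by simp
qed

lemma count_bound:
  assumes "graph_on V E" "m > 0" "eps_close_connected m \<epsilon> V E"
  shows "real (card (comp V E ` V)) \<le> \<epsilon> * real m + 1"
proof -
  obtain E' where E': "graph_on V E'" "connected_graph V E'" "graph_dist m E E' \<le> \<epsilon>"
    using assms(3) unfolding eps_close_connected_def by blast
  have fV: "finite V" using assms(1) graph_on_def by auto
  have "E \<subseteq> Pow V" "E' \<subseteq> Pow V" using assms(1) E'(1) unfolding graph_on_def by auto
  then have fE: "finite E" "finite E'" using fV by (auto intro: finite_subset)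
  define A where "A = E' - E"
  have fA: "finite A" using fE A_def by simp
  have c1: "card (comp V E ` V) \<le> card (comp V (E \<union> A) ` V) + card A"
    by (rule count_union[OF fA fV])
  have "\<And>v. v \<in> V \<Longrightarrow> comp V (E \<union> A) v = V"
  proof -
    fix v assume v: "v \<in> V"
    have "adj E' \<subseteq> adj (E \<union> A)" unfolding adj_def A_def by auto
    then have "(adj E')\<^sup>* \<subseteq> (adj (E \<union> A))\<^sup>*" by (rule rtrancl_mono)
    then have "\<forall>u\<in>V. (v,u) \<in> (adj (E \<union> A))\<^sup>*" using E'(2) v unfolding connected_graph_def by blast
    then show "comp V (E \<union> A) v = V" unfolding comp_def by auto
  qed
  then have "comp V (E \<union> A) ` V \<subseteq> {V}" by auto
  then have c2: "card (comp V (E \<union> A) ` V) \<le> 1"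
    using card_mono[of "{V}" "comp V (E \<union> A) ` V"] by simp
  have "card A \<le> card ((E - E') \<union> (E' - E))" unfolding A_def using fE by (intro card_mono) auto
  moreover have "real (card ((E - E') \<union> (E' - E))) / real m \<le> \<epsilon>" using E'(3) unfolding graph_dist_def .
  then have "real (card ((E - E') \<union> (E' - E))) \<le> \<epsilon> * real m" using assms(2)
    by (simp add: pos_divide_le_eq)
  ultimately have "real (card A) \<le> \<epsilon> * real m" by linarith
  then show ?thesis using c1 c2 by linarith
qed



abbreviation M0 :: "real measure" where "M0 \<equiv> uniform_measure lborel {0<..1}"

lemma prob_M0: "prob_space M0"
  by (rule prob_space_uniform_measure) auto

lemma prob_rank: "prob_space (rank_space V)"
  unfolding rank_space_def by (rule prob_space_PiM) (rule prob_M0)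

definition Aev :: "'a set \<Rightarrow> 'a set \<Rightarrow> 'a \<Rightarrow> ('a \<Rightarrow> real) set" where
  "Aev V S u = {r \<in> space (rank_space V). \<forall>w\<in>S-{u}. r u < r w}"

lemma meas_A:
  assumes "finite S" "S \<subseteq> V" "u \<in> V"
  shows "Aev V S u \<in> sets (rank_space V)"
proof -
  have "\<And>w. w \<in> V \<Longrightarrow> (\<lambda>r. r w) \<in> borel_measurable (rank_space V)"
    unfolding rank_space_def by (rule measurable_compose[OF measurable_component_singleton measurable_ident_sets]) auto
  then have m: "\<And>w. w \<in> V \<Longrightarrow> (\<lambda>r. r w) \<in> borel_measurable (rank_space V)" by simp
  have "\<And>w. w \<in> S \<Longrightarrow> {r \<in> space (rank_space V). r u < r w} \<in> sets (rank_space V)"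
    using m assms by (intro borel_measurable_less) auto
  then have "{r \<in> space (rank_space V). \<forall>w\<in>S-{u}. r u < r w} \<in> sets (rank_space V)"
    using assms by (intro sets.sets_Collect_finite_All) auto
  then show ?thesis unfolding Aev_def .
qed

lemma swap_eq:
  assumes "finite S" "S \<subseteq> V" "u \<in> S" "v \<in> S"
  shows "measure (rank_space V) (Aev V S u) = measure (rank_space V) (Aev V S v)"
proof -
  define \<tau> where "\<tau> = (\<lambda>x. if x = u then v else if x = v then u else x)"
  define t where "t = (\<lambda>\<omega>::'a\<Rightarrow>real. \<lambda>n\<in>V. \<omega> (\<tau> n))"
  have uv: "u \<in> V" "v \<in> V" using assms by auto
  have inj: "inj_on \<tau> V" unfolding \<tau>_def inj_on_def by auto
  have fn: "\<tau> \<in> V \<rightarrow> V" unfolding \<tau>_def using uv by auto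
  have d: "distr (rank_space V) (rank_space V) t = rank_space V"
    unfolding rank_space_def t_def
    by (rule distr_PiM_reindex[of V "\<lambda>_. M0" \<tau> V, OF prob_M0 inj fn])
  have tm: "t \<in> measurable (rank_space V) (rank_space V)"
    unfolding rank_space_def t_def
    apply (rule measurable_restrict)
    apply (rule measurable_component_singleton)
    using fn by auto
  have "t -` Aev V S v \<inter> space (rank_space V) = Aev V S u"
  proof -
    have "\<And>r. r \<in> space (rank_space V) \<Longrightarrow> t r \<in> space (rank_space V)"
      by (rule measurable_space[OF tm])
    moreover have "\<And>r. r \<in> space (rank_space V) \<Longrightarrow>
        (\<forall>w\<in>S-{v}. t r v < t r w) \<longleftrightarrow> (\<forall>w\<in>S-{u}. r u < r w)"
    proof -
      fix r assume "r \<in> space (rank_space V)"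
      have tv: "t r v = r u" using uv unfolding t_def \<tau>_def by simp
      have tw: "\<And>w. w \<in> S \<Longrightarrow> t r w = r (\<tau> w)" using assms unfolding t_def by auto
      have img: "\<tau> ` (S - {v}) = S - {u}"
      proof (intro equalityI subsetI)
        fix x assume "x \<in> \<tau> ` (S - {v})"
        then obtain w where w: "w \<in> S - {v}" "x = \<tau> w" by blast
        then show "x \<in> S - {u}" using assms(4) unfolding \<tau>_def by (cases "w = u") auto
      next
        fix x assume x: "x \<in> S - {u}"
        show "x \<in> \<tau> ` (S - {v})"
        proof (cases "x = v")
          case True
          then have "x = \<tau> u" "u \<in> S - {v}" using assms x unfolding \<tau>_def by auto
          then show ?thesis by blast
        next
          case False
          then have "x = \<tau> x" "x \<in> S - {v}" using x unfolding \<tau>_def by auto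
          then show ?thesis by blast
        qed
      qed
      have "(\<forall>w\<in>S-{v}. t r v < t r w) \<longleftrightarrow> (\<forall>w\<in>S-{v}. r u < r (\<tau> w))"
        using tv tw by (simp del: Set.ball_simps)
      also have "\<dots> \<longleftrightarrow> (\<forall>w\<in>\<tau> ` (S-{v}). r u < r w)" by simp
      finally show "(\<forall>w\<in>S-{v}. t r v < t r w) \<longleftrightarrow> (\<forall>w\<in>S-{u}. r u < r w)" using img by simp
    qed
    ultimately show ?thesis unfolding Aev_def by blast
  qed
  then have "measure (rank_space V) (Aev V S u) = measure (distr (rank_space V) (rank_space V) t) (Aev V S v)"
    using measure_distr[OF tm meas_A[OF assms(1,2)]] uv by simp
  then show ?thesis using d by simp
qed



lemma prob_le:
  assumes "finite S" "S \<subseteq> V" "v \<in> S" "card S = K" "K > 0"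
  shows "measure (rank_space V) (Aev V S v) \<le> 1 / real K"
proof -
  interpret prob_space "rank_space V" by (rule prob_rank)
  have sets: "Aev V S ` S \<subseteq> sets (rank_space V)"
    by (intro image_subsetI meas_A[OF assms(1,2)]) (use assms(2) in blast)
  have disj: "disjoint_family_on (Aev V S) S"
    unfolding disjoint_family_on_def
  proof (intro ballI impI)
    fix x y assume xy: "x \<in> S" "y \<in> S" "x \<noteq> y"
    show "Aev V S x \<inter> Aev V S y = {}"
    proof (rule ccontr)
      assume "Aev V S x \<inter> Aev V S y \<noteq> {}"
      then obtain r where r: "r \<in> Aev V S x" "r \<in> Aev V S y" by blast
      have "r x < r y" using r(1) xy unfolding Aev_def by simp
      moreover have "r y < r x" using r(2) xy unfolding Aev_def by simp
      ultimately show False by simp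
    qed
  qed
  have "measure (rank_space V) (\<Union>w\<in>S. Aev V S w) = (\<Sum>w\<in>S. measure (rank_space V) (Aev V S w))"
    by (rule measure_finite_Union[OF assms(1) sets disj]) (simp add: emeasure_finite)
  also have "\<dots> = (\<Sum>w\<in>S. measure (rank_space V) (Aev V S v))"
    by (intro sum.cong refl swap_eq[OF assms(1,2) _ assms(3)])
  also have "\<dots> = real K * measure (rank_space V) (Aev V S v)" using assms(4) by simp
  finally have eq: "measure (rank_space V) (\<Union>w\<in>S. Aev V S w) = real K * measure (rank_space V) (Aev V S v)" .
  have "real K * measure (rank_space V) (Aev V S v) \<le> 1"
    using eq prob_le_1[of "\<Union>w\<in>S. Aev V S w"] by linarith
  then show ?thesis using assms(5) by (simp add: field_simps)
qed


lemma cardsum: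
  assumes "finite W"
  shows "real (card {v\<in>W. r \<in> B v}) = (\<Sum>v\<in>W. indicator (B v) r)"
proof -
  have "(\<Sum>v\<in>W. indicator (B v) r) = (\<Sum>v\<in>W. (of_bool (r \<in> B v) :: real))"
    by (simp add: indicator_def)
  also have "\<dots> = real (card (W \<inter> {v. r \<in> B v}))" using assms by simp
  also have "W \<inter> {v. r \<in> B v} = {v\<in>W. r \<in> B v}" by blast
  finally show ?thesis by simp
qed

theorem mainTheorem7:
  fixes V :: "'a set" and E :: "'a set set" and U :: "'a \<Rightarrow> 'a set"
    and n m K :: nat and \<epsilon> \<delta> :: real
  assumes "graph_on V E" and "card V = n"
    and "m > 0" and "card E \<le> m"
    and "eps_close_connected m \<epsilon> V E"
    and "K > 0" and "0 < \<delta>" and "\<delta> < 1"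
    and "\<forall>v\<in>V. v \<in> U v \<and> U v \<subseteq> comp V E v"
    and "\<forall>v\<in>V. card (comp V E v) < K \<longrightarrow> U v = comp V E v"
    and "\<forall>v\<in>V. card (comp V E v) \<ge> K \<longrightarrow> card (U v) = K"
  shows "measure (rank_space V)
           {r \<in> space (rank_space V).
              real (card {v \<in> V. special U r v})
                \<le> real n / (\<delta> * real K) + \<epsilon> * real m + 1}
         \<ge> 1 - \<delta>"
proof -
  interpret prob_space "rank_space V" by (rule prob_rank)
  have fV: "finite V" using assms(1) graph_on_def by auto
  have compV: "\<And>v. comp V E v \<subseteq> V" unfolding comp_def by auto
  have Usub: "\<And>v. v \<in> V \<Longrightarrow> U v \<subseteq> V"
  proof -
    fix v assume "v \<in> V"
    then have "U v \<subseteq> comp V E v" using assms(9) by blast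
    then show "U v \<subseteq> V" using compV[of v] by (rule order.trans)
  qed
  have fU: "\<And>v. v \<in> V \<Longrightarrow> finite (U v)" using Usub fV by (rule finite_subset)
  have eps0: "0 \<le> \<epsilon>"
  proof -
    obtain E' where "graph_dist m E E' \<le> \<epsilon>" using assms(5) unfolding eps_close_connected_def by blast
    moreover have "0 \<le> graph_dist m E E'" unfolding graph_dist_def by simp
    ultimately show ?thesis by linarith
  qed
  have cb: "real (card (comp V E ` V)) \<le> \<epsilon> * real m + 1"
    by (rule count_bound[OF assms(1,3,5)])
  define L where "L = {v\<in>V. card (comp V E v) \<ge> K}"
  have fL: "finite L" using fV L_def by simp
  have LV: "L \<subseteq> V" using L_def by auto
  define A where "A = (\<lambda>v. Aev V (U v) v)"
  have Ameas: "\<And>v. v \<in> V \<Longrightarrow> A v \<in> sets (rank_space V)"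
    unfolding A_def by (rule meas_A[OF fU Usub]) (use assms(9) in blast)+
  have spec: "\<And>r v. r \<in> space (rank_space V) \<Longrightarrow> special U r v \<longleftrightarrow> r \<in> A v"
    unfolding special_def A_def Aev_def by simp
  define X where "X = (\<lambda>r. \<Sum>v\<in>L. indicator (A v) r :: real)"
  define Y where "Y = (\<lambda>r. \<Sum>v\<in>V. indicator (A v) r :: real)"
  have Xcard: "\<And>r. r \<in> space (rank_space V) \<Longrightarrow> X r = real (card {v\<in>L. special U r v})"
  proof -
    fix r assume r: "r \<in> space (rank_space V)"
    have "{v\<in>L. special U r v} = {v\<in>L. r \<in> A v}" using spec[OF r] by blast
    then show "X r = real (card {v\<in>L. special U r v})" unfolding X_def by (simp add: cardsum[OF fL, of r A])
  qed
  have Ycard: "\<And>r. r \<in> space (rank_space V) \<Longrightarrow> Y r = real (card {v\<in>V. special U r v})"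
  proof -
    fix r assume r: "r \<in> space (rank_space V)"
    have "{v\<in>V. special U r v} = {v\<in>V. r \<in> A v}" using spec[OF r] by blast
    then show "Y r = real (card {v\<in>V. special U r v})" unfolding Y_def by (simp add: cardsum[OF fV, of r A])
  qed
  have small: "\<And>r. card {v\<in>V-L. special U r v} \<le> card (comp V E ` V)"
  proof -
    fix r
    have "inj_on (comp V E) {v\<in>V-L. special U r v}"
    proof (rule inj_onI)
      fix v w assume v: "v \<in> {v\<in>V-L. special U r v}" and w: "w \<in> {v\<in>V-L. special U r v}"
        and eq: "comp V E v = comp V E w"
      show "v = w"
      proof (rule ccontr)
        assume ne: "v \<noteq> w"
        have Uv: "U v = comp V E v" using v assms(10) L_def by auto
        have Uw: "U w = comp V E w" using w assms(10) L_def by auto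
        have "w \<in> comp V E w" using w unfolding comp_def by simp
        then have "w \<in> U v - {v}" using Uv eq ne by simp
        then have 1: "r v < r w" using v unfolding special_def by blast
        have "v \<in> comp V E v" using v unfolding comp_def by simp
        then have "v \<in> U w - {w}" using Uw eq ne by simp
        then have 2: "r w < r v" using w unfolding special_def by blast
        show False using 1 2 by simp
      qed
    qed
    moreover have "comp V E ` {v\<in>V-L. special U r v} \<subseteq> comp V E ` V" by blast
    ultimately show "card {v\<in>V-L. special U r v} \<le> card (comp V E ` V)"
      using fV by (intro card_inj_on_le) auto
  qed
  have split: "\<And>r. card {v\<in>V. special U r v} \<le> card {v\<in>L. special U r v} + card {v\<in>V-L. special U r v}"
  proof -
    fix r
    have "{v\<in>V. special U r v} = {v\<in>L. special U r v} \<union> {v\<in>V-L. special U r v}" using LV by blast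
    then show "card {v\<in>V. special U r v} \<le> card {v\<in>L. special U r v} + card {v\<in>V-L. special U r v}"
      by (metis card_Un_le)
  qed
  have intA: "\<And>v. v \<in> V \<Longrightarrow> integrable (rank_space V) (indicator (A v) :: _ \<Rightarrow> real)"
    using Ameas by (simp add: emeasure_finite less_top[symmetric])
  have Xint: "integrable (rank_space V) X"
    unfolding X_def by (rule Bochner_Integration.integrable_sum) (use intA LV in blast)
  have "integral\<^sup>L (rank_space V) X = (\<Sum>v\<in>L. integral\<^sup>L (rank_space V) (indicator (A v) :: _ \<Rightarrow> real))"
    unfolding X_def by (rule Bochner_Integration.integral_sum) (use intA LV in blast)
  also have "\<dots> = (\<Sum>v\<in>L. measure (rank_space V) (A v))"
  proof (rule sum.cong[OF refl])
    fix v assume "v \<in> L"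
    then have "v \<in> V" using LV by blast
    then show "integral\<^sup>L (rank_space V) (indicator (A v) :: _ \<Rightarrow> real) = measure (rank_space V) (A v)"
      using Ameas by (intro has_bochner_integral_integral_eq has_bochner_integral_real_indicator)
        (auto simp: emeasure_finite less_top[symmetric])
  qed
  also have "\<dots> \<le> (\<Sum>v\<in>L. 1 / real K)"
  proof (rule sum_mono)
    fix v assume vL: "v \<in> L"
    then have v: "v \<in> V" using LV by blast
    have "card (U v) = K" using vL assms(11) L_def by simp
    then show "measure (rank_space V) (A v) \<le> 1 / real K"
      unfolding A_def using prob_le[OF fU[OF v] Usub[OF v] _ _ assms(6)] assms(9) v by simp
  qed
  also have "\<dots> = real (card L) / real K" by simp
  also have "\<dots> \<le> real n / real K"
    using card_mono[OF fV LV] assms(2) by (simp add: divide_right_mono)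
  finally have EX: "integral\<^sup>L (rank_space V) X \<le> real n / real K" .
  define a where "a = real n / (\<delta> * real K)"
  have main: "\<And>r. r \<in> space (rank_space V) \<Longrightarrow> X r < a \<Longrightarrow>
      real (card {v \<in> V. special U r v}) \<le> real n / (\<delta> * real K) + \<epsilon> * real m + 1"
  proof -
    fix r assume r: "r \<in> space (rank_space V)" and Xa: "X r < a"
    have "real (card {v \<in> V. special U r v}) \<le> real (card {v\<in>L. special U r v}) + real (card {v\<in>V-L. special U r v})"
      using split[of r] by linarith
    also have "\<dots> \<le> X r + (\<epsilon> * real m + 1)"
      using Xcard[OF r] small[of r] cb by linarith
    finally show "real (card {v \<in> V. special U r v}) \<le> real n / (\<delta> * real K) + \<epsilon> * real m + 1"
      using Xa a_def by linarith
  qed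
  define F where "F = {r \<in> space (rank_space V).
              real (card {v \<in> V. special U r v}) \<le> real n / (\<delta> * real K) + \<epsilon> * real m + 1}"
  have Fmeas: "F \<in> sets (rank_space V)"
  proof -
    have "F = {r \<in> space (rank_space V). Y r \<le> real n / (\<delta> * real K) + \<epsilon> * real m + 1}"
      unfolding F_def using Ycard by auto
    moreover have "Y \<in> borel_measurable (rank_space V)"
      unfolding Y_def using Ameas by (intro borel_measurable_sum borel_measurable_indicator) 
    ultimately show ?thesis by simp
  qed
  show ?thesis
  proof (cases "n = 0")
    case True
    then have "V = {}" using assms(2) fV by simp
    have "0 \<le> \<epsilon> * real m" using eps0 by simp
    then have "F = space (rank_space V)" unfolding F_def using \<open>V = {}\<close> True by simp
    then show ?thesis unfolding F_def[symmetric] using prob_space assms(7) by simp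
  next
    case False
    then have apos: "a > 0" unfolding a_def using assms(6,7) by simp
    define B where "B = {r \<in> space (rank_space V). X r \<ge> a}"
    have Bmeas: "B \<in> sets (rank_space V)"
      unfolding B_def using borel_measurable_integrable[OF Xint] by measurable
    have "measure (rank_space V) B \<le> integral\<^sup>L (rank_space V) X / a"
      unfolding B_def
      by (rule integral_Markov_inequality_measure[OF Xint sets.top _ apos])
        (auto simp: X_def intro!: AE_I2 sum_nonneg)
    also have "\<dots> \<le> (real n / real K) / a" using divide_right_mono[OF EX, of a] apos by simp
    also have "\<dots> = \<delta>" unfolding a_def using False assms(6,7) by (simp add: field_simps)
    finally have PB: "measure (rank_space V) B \<le> \<delta>" .
    have "space (rank_space V) - B \<subseteq> F"
      unfolding B_def F_def using main by auto
    then have "measure (rank_space V) (space (rank_space V) - B) \<le> measure (rank_space V) F"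
      using Fmeas by (rule finite_measure_mono)
    moreover have "measure (rank_space V) (space (rank_space V) - B) = 1 - measure (rank_space V) B"
      using Bmeas by (rule prob_compl)
    ultimately show ?thesis unfolding F_def[symmetric] using PB by linarith
  qed
qed

end
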